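(* Let $\sigma\in\{1,-1\}$, let $U$ be an open subset of the Weyl upper half-plane, and let $\varphi:U\to\mathbb{C}$ be a $C^\infty$ function of the form $$\varphi(\rho,v)=\frac{-\sigma(\omega-v)\pm\sqrt{(\omega-v)^2+\sigma\rho^2}}{\rho}$$ for a fixed $\omega\in\mathbb{C}$ and a fixed continuous branch of the square root on $U$, with $\varphi\neq0$ and $\varphi^2+\sigma\neq0$ on $U$. Let $M$ be an invertible $n\times n$ matrix function on $U$ of class $C^2$ and let $A=M^{-1}dM$. Suppose there is an invertible $n\times n$ matrix function $X$ on $U$ of class $C^2$, with $X^{-1}$ of class $C^1$, satisfying the Breitenlohner–Maison linear system $$\varphi\,(dX+AX)=\star\, dX\quad\text{on }U.$$ Then $A$ satisfies the field equations $$d(\rho\,\star A)=0\quad\text{on }U.$$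
   Context: The Weyl upper half-plane is $\{(\rho,v)\in\mathbb{R}^2:\rho>0\}$. The Hodge star $\star$ acts on one-forms in $(\rho,v)$ (entrywise on matrix-valued one-forms, linearly over functions) by $\star d\rho=-\sigma\,dv$, $\star dv=d\rho$; $d$ is the exterior derivative in $(\rho,v)$. *)

theory Defs
  imports "HOL-Analysis.Analysis"
begin

text \<open>Points of the Weyl half-plane are pairs (rho, v) :: real \<times> real.
  Matrix functions are complex n\<times>n matrices, type complex^'n^'n.\<close>

definition weyl_half_plane :: "(real \<times> real) set" where
  "weyl_half_plane = {p. fst p > 0}"

definition pd_rho :: "(real \<times> real \<Rightarrow> 'a::real_normed_vector) \<Rightarrow> real \<times> real \<Rightarrow> 'a" where
  "pd_rho f p = vector_derivative (\<lambda>t. f (t, snd p)) (at (fst p))"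

definition pd_v :: "(real \<times> real \<Rightarrow> 'a::real_normed_vector) \<Rightarrow> real \<times> real \<Rightarrow> 'a" where
  "pd_v f p = vector_derivative (\<lambda>t. f (fst p, t)) (at (snd p))"

fun Ck_on :: "nat \<Rightarrow> (real \<times> real) set \<Rightarrow> (real \<times> real \<Rightarrow> 'a::real_normed_vector) \<Rightarrow> bool" where
  "Ck_on 0 U f = continuous_on U f"
| "Ck_on (Suc k) U f = ((\<forall>p\<in>U. f differentiable (at p))
      \<and> Ck_on k U (pd_rho f) \<and> Ck_on k U (pd_v f))"

definition Cinf_on :: "(real \<times> real) set \<Rightarrow> (real \<times> real \<Rightarrow> 'a::real_normed_vector) \<Rightarrow> bool" where
  "Cinf_on U f = (\<forall>k. Ck_on k U f)"

text \<open>Matrix-valued one-forms  f d\<rho> + g dv  are represented by the pair (f, g).\<close>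
type_synonym ('n) mform = "(real \<times> real \<Rightarrow> complex^'n^'n) \<times> (real \<times> real \<Rightarrow> complex^'n^'n)"

definition d0 :: "(real \<times> real \<Rightarrow> complex^'n::finite^'n) \<Rightarrow> 'n mform" where
  "d0 f = (pd_rho f, pd_v f)"

text \<open>Exterior derivative of a one-form  f d\<rho> + g dv, as coefficient of d\<rho> \<and> dv.\<close>
definition d1 :: "('n::finite) mform \<Rightarrow> (real \<times> real \<Rightarrow> complex^'n^'n)" where
  "d1 w = (\<lambda>p. pd_rho (snd w) p - pd_v (fst w) p)"

text \<open>Hodge star: \<star>d\<rho> = -\<sigma> dv, \<star>dv = d\<rho>, linear over functions.\<close>
definition hodge :: "real \<Rightarrow> ('n::finite) mform \<Rightarrow> 'n mform" where
  "hodge \<sigma> w = (snd w, (\<lambda>p. - \<sigma> *\<^sub>R fst w p))"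

definition cmat :: "complex \<Rightarrow> complex^('n::finite)^'n \<Rightarrow> complex^'n^'n" where
  "cmat c A = (\<chi> i j. c * A $ i $ j)"

definition form_scale :: "(real \<times> real \<Rightarrow> complex) \<Rightarrow> ('n::finite) mform \<Rightarrow> 'n mform" where
  "form_scale h w = ((\<lambda>p. cmat (h p) (fst w p)), (\<lambda>p. cmat (h p) (snd w p)))"

definition form_rmult :: "('n::finite) mform \<Rightarrow> (real \<times> real \<Rightarrow> complex^'n::finite^'n) \<Rightarrow> 'n mform" where
  "form_rmult w X = ((\<lambda>p. fst w p ** X p), (\<lambda>p. snd w p ** X p))"

definition form_add :: "('n::finite) mform \<Rightarrow> 'n mform \<Rightarrow> 'n mform" where
  "form_add w w' = ((\<lambda>p. fst w p + fst w' p), (\<lambda>p. snd w p + snd w' p))"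

definition form_eq_on :: "(real \<times> real) set \<Rightarrow> ('n::finite) mform \<Rightarrow> 'n mform \<Rightarrow> bool" where
  "form_eq_on U w w' = (\<forall>p\<in>U. fst w p = fst w' p \<and> snd w p = snd w' p)"

definition maurer_cartan :: "(real \<times> real \<Rightarrow> complex^'n::finite^'n) \<Rightarrow> 'n mform" where
  "maurer_cartan M = ((\<lambda>p. matrix_inv (M p) ** pd_rho M p), (\<lambda>p. matrix_inv (M p) ** pd_v M p))"

end

theory Submission
  imports Defs
begin


lemma line_rho_hd:
  assumes "(F has_derivative D) (at (a,b))"
  shows "((\<lambda>t. F (t,b)) has_vector_derivative D (1,0)) (at a)"
proof -
  have l: "((\<lambda>t. (t,b)) has_derivative (\<lambda>t. (t,0))) (at a)"
    by (auto intro!: derivative_eq_intros)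
  have "((\<lambda>t. F (t,b)) has_derivative (\<lambda>t. D (t,0))) (at a)"
    using has_derivative_compose[OF l, of F D] assms by (simp add: o_def)
  moreover have e: "D (t,0) = t *\<^sub>R D (1,0)" for t
  proof -
    have bl: "linear D" using has_derivative_linear[OF assms] .
    have "(t,0) = t *\<^sub>R ((1::real),0)" by simp
    then show ?thesis using linear_scale[OF bl, of t "((1::real),0)"] by simp
  qed
  moreover have "(\<lambda>t. D (t,0)) = (\<lambda>t. t *\<^sub>R D (1,0))" by (rule ext, rule e)
  ultimately show ?thesis unfolding has_vector_derivative_def by metis
qed

lemma line_v_hd:
  assumes "(F has_derivative D) (at (a,b))"
  shows "((\<lambda>t. F (a,t)) has_vector_derivative D (0,1)) (at b)"
proof -
  have l: "((\<lambda>t. (a,t)) has_derivative (\<lambda>t. (0,t))) (at b)"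
    by (auto intro!: derivative_eq_intros)
  have "((\<lambda>t. F (a,t)) has_derivative (\<lambda>t. D (0,t))) (at b)"
    using has_derivative_compose[OF l, of F D] assms by (simp add: o_def)
  moreover have e: "D (0,t) = t *\<^sub>R D (0,1)" for t
  proof -
    have bl: "linear D" using has_derivative_linear[OF assms] .
    have "(0,t) = t *\<^sub>R (0,(1::real))" by simp
    then show ?thesis using linear_scale[OF bl, of t "(0,(1::real))"] by simp
  qed
  moreover have "(\<lambda>t. D (0,t)) = (\<lambda>t. t *\<^sub>R D (0,1))" by (rule ext, rule e)
  ultimately show ?thesis unfolding has_vector_derivative_def by metis
qed

lemma pd_rho_hd: "(F has_derivative D) (at p) \<Longrightarrow> pd_rho F p = D (1,0)"
  unfolding pd_rho_def using line_rho_hd[of F D "fst p" "snd p"]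
  by (auto intro: vector_derivative_at)

lemma pd_v_hd: "(F has_derivative D) (at p) \<Longrightarrow> pd_v F p = D (0,1)"
  unfolding pd_v_def using line_v_hd[of F D "fst p" "snd p"]
  by (auto intro: vector_derivative_at)

lemma line_rho: "F differentiable (at (a,b)) \<Longrightarrow>
   ((\<lambda>t. F (t,b)) has_vector_derivative pd_rho F (a,b)) (at a)"
  by (metis differentiable_def line_rho_hd pd_rho_hd)

lemma line_v: "F differentiable (at (a,b)) \<Longrightarrow>
   ((\<lambda>t. F (a,t)) has_vector_derivative pd_v F (a,b)) (at b)"
  by (metis differentiable_def line_v_hd pd_v_hd)

lemma hvd_unique_open:
  assumes "(f has_vector_derivative D) (at t)" "(g has_vector_derivative E) (at t)"
    "open S" "t \<in> S" "\<And>s. s \<in> S \<Longrightarrow> f s = g s"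
  shows "D = E"
proof -
  have "(g has_vector_derivative D) (at t)"
    using has_vector_derivative_transform_within_open[OF assms(1,3,4)] assms(5) by blast
  then show ?thesis using assms(2) vector_derivative_unique_at by blast
qed

lemma open_line_rho: "open (U::(real\<times>real) set) \<Longrightarrow> open {t. (t,b) \<in> U}"
proof -
  assume "open U"
  have "open ((\<lambda>t::real. (t,b)) -` U)"
    by (rule continuous_open_vimage[OF \<open>open U\<close>]) (intro continuous_intros)
  then show ?thesis by (simp add: vimage_def)
qed

lemma open_line_v: "open (U::(real\<times>real) set) \<Longrightarrow> open {t. (a,t) \<in> U}"
proof -
  assume "open U"
  have "open ((\<lambda>t::real. (a,t)) -` U)"
    by (rule continuous_open_vimage[OF \<open>open U\<close>]) (intro continuous_intros)
  then show ?thesis by (simp add: vimage_def)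
qed



lemma line_rho_shift: "F differentiable (at (x+t, b)) \<Longrightarrow>
   ((\<lambda>t. F (x+t, b)) has_vector_derivative pd_rho F (x+t,b)) (at t)"
proof -
  assume a: "F differentiable (at (x+t, b))"
  have 1: "((\<lambda>t. x + t) has_vector_derivative 1) (at t)"
    by (auto intro!: derivative_eq_intros)
  have "(((\<lambda>u. F (u,b)) \<circ> (\<lambda>t. x + t)) has_vector_derivative (1 *\<^sub>R pd_rho F (x+t,b))) (at t)"
    by (rule vector_diff_chain_at[OF 1]) (use line_rho[OF a] in simp)
  then show ?thesis by (simp add: o_def)
qed

lemma line_v_shift: "F differentiable (at (a, y+t)) \<Longrightarrow>
   ((\<lambda>t. F (a, y+t)) has_vector_derivative pd_v F (a, y+t)) (at t)"
proof -
  assume a: "F differentiable (at (a, y+t))"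
  have 1: "((\<lambda>t. y + t) has_vector_derivative 1) (at t)"
    by (auto intro!: derivative_eq_intros)
  have "(((\<lambda>u. F (a,u)) \<circ> (\<lambda>t. y + t)) has_vector_derivative (1 *\<^sub>R pd_v F (a,y+t))) (at t)"
    by (rule vector_diff_chain_at[OF 1]) (use line_v[OF a] in simp)
  then show ?thesis by (simp add: o_def)
qed

lemma mvt_est:
  fixes g :: "real \<Rightarrow> 'a::real_normed_vector"
  assumes h: "0 < h" and gd: "\<And>t. t\<in>{0..h} \<Longrightarrow> (g has_vector_derivative g' t) (at t)"
    and bd: "\<And>t. t\<in>{0..h} \<Longrightarrow> norm (g' t - c) \<le> B"
  shows "norm (g h - g 0 - h *\<^sub>R c) \<le> B * h"
proof -
  have lc: "((\<lambda>x. x *\<^sub>R c) has_vector_derivative c) (at t)" for t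
    unfolding has_vector_derivative_def
    by (rule bounded_linear_imp_has_derivative) (rule bounded_linear_scaleR_left)
  have dd: "((\<lambda>t. g t - t *\<^sub>R c) has_vector_derivative (g' t - c)) (at t)" if "t \<in> {0..h}" for t
    by (rule has_vector_derivative_diff[OF gd[OF that] lc])
  have cont: "continuous_on {0..h} (\<lambda>t. g t - t *\<^sub>R c)"
  proof (intro continuous_at_imp_continuous_on ballI)
    fix t assume "t \<in> {0..h}"
    from dd[OF \<open>t \<in> {0..h}\<close>] show "isCont (\<lambda>t. g t - t *\<^sub>R c) t"
      using has_vector_derivative_continuous by blast
  qed
  have "norm ((g h - h *\<^sub>R c) - (g 0 - 0 *\<^sub>R c)) \<le> B * h - B * 0"
  proof (rule differentiable_bound_general[OF h cont, of "\<lambda>t. B * t" "\<lambda>t. g' t - c" "\<lambda>_. B"])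
    show "continuous_on {0..h} (\<lambda>t. B * t)" by (intro continuous_intros)
    fix t assume t: "0 < t" "t < h"
    then have tt: "t \<in> {0..h}" by auto
    show "((\<lambda>t. g t - t *\<^sub>R c) has_vector_derivative g' t - c) (at t)"
      by (rule dd[OF tt])
    show "((\<lambda>t. B * t) has_vector_derivative B) (at t)"
      by (auto intro!: derivative_eq_intros)
    show "norm (g' t - c) \<le> B" using bd[OF tt] .
  qed
  then show ?thesis by (simp add: algebra_simps)
qed

lemma norm_pair_le: "norm ((t::real), (s::real)) \<le> \<bar>t\<bar> + \<bar>s\<bar>"
proof -
  have "norm (t, s) = norm ((t,0) + (0,s))" by simp
  also have "\<dots> \<le> norm (t,0::real) + norm (0::real,s)" by (rule norm_triangle_ineq)
  finally show ?thesis by (simp add: norm_Pair)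
qed

lemma young:
  fixes f :: "real \<times> real \<Rightarrow> 'a::real_normed_vector"
  assumes U: "open U" "(x,y) \<in> U" and fd: "\<And>q. q\<in>U \<Longrightarrow> f differentiable (at q)"
    and D1: "(pd_rho f has_derivative D1) (at (x,y))"
    and D2: "(pd_v f has_derivative D2) (at (x,y))"
  shows "D1 (0,1) = D2 (1,0)"
proof -
  obtain r where r: "r > 0" "ball (x,y) r \<subseteq> U" using U open_contains_ball by blast
  have lin1: "linear D1" using D1 has_derivative_linear by blast
  have lin2: "linear D2" using D2 has_derivative_linear by blast
  have key: "norm (D1 (0,1) - D2 (1,0)) \<le> 8 * e" if e: "e > 0" for e
  proof -
    obtain d1 where d1: "d1 > 0" "\<And>z. norm (z - (x,y)) < d1 \<Longrightarrow>
       norm (pd_rho f z - pd_rho f (x,y) - D1 (z - (x,y))) \<le> e * norm (z - (x,y))"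
      using D1[unfolded has_derivative_at_alt] e by blast
    obtain d2 where d2: "d2 > 0" "\<And>z. norm (z - (x,y)) < d2 \<Longrightarrow>
       norm (pd_v f z - pd_v f (x,y) - D2 (z - (x,y))) \<le> e * norm (z - (x,y))"
      using D2[unfolded has_derivative_at_alt] e by blast
    define h where "h = min r (min d1 d2) / 4"
    have h: "h > 0" "2*h < r" "2*h < d1" "2*h < d2" using r d1 d2 by (auto simp: h_def)
    have nb: "norm (t, s) \<le> 2*h" if "0 \<le> t" "t \<le> h" "0 \<le> s" "s \<le> h" for t s
      using norm_pair_le[of t s] that by auto
    have nb': "norm ((x+t, y+s) - (x,y)) \<le> 2*h" if "0 \<le> t" "t \<le> h" "0 \<le> s" "s \<le> h" for t s
      using nb[OF that] by simp
    have inU: "(x+t, y+s) \<in> U" if "0 \<le> t" "t \<le> h" "0 \<le> s" "s \<le> h" for t s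
    proof -
      have "dist (x,y) (x+t, y+s) = norm (t,s)"
        by (simp add: dist_Pair_Pair norm_Pair dist_real_def)
      then have "(x+t, y+s) \<in> ball (x,y) r" using nb[OF that] h by simp
      then show ?thesis using r(2) by blast
    qed
    have est1: "norm (pd_rho f (x+t,y+s) - pd_rho f (x,y) - D1 (t,s)) \<le> e * (2*h)"
      if "0 \<le> t" "t \<le> h" "0 \<le> s" "s \<le> h" for t s
    proof -
      have "norm (pd_rho f (x+t,y+s) - pd_rho f (x,y) - D1 ((x+t,y+s) - (x,y)))
          \<le> e * norm ((x+t,y+s) - (x,y))"
        using d1(2)[of "(x+t,y+s)"] nb'[OF that] h by linarith
      also have "\<dots> \<le> e * (2*h)" using nb'[OF that] e by (intro mult_left_mono) auto
      finally show ?thesis by simp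
    qed
    have est2: "norm (pd_v f (x+t,y+s) - pd_v f (x,y) - D2 (t,s)) \<le> e * (2*h)"
      if "0 \<le> t" "t \<le> h" "0 \<le> s" "s \<le> h" for t s
    proof -
      have "norm (pd_v f (x+t,y+s) - pd_v f (x,y) - D2 ((x+t,y+s) - (x,y)))
          \<le> e * norm ((x+t,y+s) - (x,y))"
        using d2(2)[of "(x+t,y+s)"] nb'[OF that] h by linarith
      also have "\<dots> \<le> e * (2*h)" using nb'[OF that] e by (intro mult_left_mono) auto
      finally show ?thesis by simp
    qed
    have A: "norm ((f (x+h,y+h) - f (x+h,y)) - (f (x,y+h) - f (x,y)) - h *\<^sub>R (h *\<^sub>R D1 (0,1)))
             \<le> (4*e*h) * h"
    proof -
      have "norm ((\<lambda>t. f (x+t,y+h) - f (x+t,y)) h - (\<lambda>t. f (x+t,y+h) - f (x+t,y)) 0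
                 - h *\<^sub>R (h *\<^sub>R D1 (0,1))) \<le> (4*e*h) * h"
      proof (rule mvt_est[OF h(1), where g' = "\<lambda>t. pd_rho f (x+t,y+h) - pd_rho f (x+t,y)"])
        fix t assume t: "t \<in> {0..h}"
        have u1: "(x+t, y+h) \<in> U" using inU[of t h] t h by auto
        have u2: "(x+t, y) \<in> U" using inU[of t 0] t h by auto
        show "((\<lambda>t. f (x+t,y+h) - f (x+t,y)) has_vector_derivative
                pd_rho f (x+t,y+h) - pd_rho f (x+t,y)) (at t)"
          by (intro has_vector_derivative_diff line_rho_shift fd u1 u2)
        have lin: "D1 (t,h) - D1 (t,0) - h *\<^sub>R D1 (0,1) = 0"
        proof -
          have "D1 (t,h) - D1 (t,0) = D1 ((t,h) - (t,0))" using linear_diff[OF lin1, of "(t,h)" "(t,0)"] by simp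
          also have "(t,h) - (t,0) = h *\<^sub>R ((0::real),(1::real))" by simp
          also have "D1 (h *\<^sub>R (0,1)) = h *\<^sub>R D1 (0,1)" using linear_scale[OF lin1, of h "(0,1)"] by simp
          finally show ?thesis by simp
        qed
        have "pd_rho f (x+t,y+h) - pd_rho f (x+t,y) - h *\<^sub>R D1 (0,1) =
              (pd_rho f (x+t,y+h) - pd_rho f (x,y) - D1 (t,h))
            - (pd_rho f (x+t,y+0) - pd_rho f (x,y) - D1 (t,0))
            + (D1 (t,h) - D1 (t,0) - h *\<^sub>R D1 (0,1))" by (simp add: algebra_simps)
        also have "norm \<dots> \<le> e*(2*h) + e*(2*h)"
          using norm_triangle_ineq4[of "pd_rho f (x+t,y+h) - pd_rho f (x,y) - D1 (t,h)"
              "pd_rho f (x+t,y+0) - pd_rho f (x,y) - D1 (t,0)"]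
            est1[of t h] est1[of t 0] t h lin by auto
        finally show "norm (pd_rho f (x+t,y+h) - pd_rho f (x+t,y) - h *\<^sub>R D1 (0,1)) \<le> 4*e*h"
          by simp
      qed
      then show ?thesis by simp
    qed
    have B: "norm ((f (x+h,y+h) - f (x,y+h)) - (f (x+h,y) - f (x,y)) - h *\<^sub>R (h *\<^sub>R D2 (1,0)))
             \<le> (4*e*h) * h"
    proof -
      have "norm ((\<lambda>s. f (x+h,y+s) - f (x,y+s)) h - (\<lambda>s. f (x+h,y+s) - f (x,y+s)) 0
                 - h *\<^sub>R (h *\<^sub>R D2 (1,0))) \<le> (4*e*h) * h"
      proof (rule mvt_est[OF h(1), where g' = "\<lambda>s. pd_v f (x+h,y+s) - pd_v f (x,y+s)"])
        fix s assume s: "s \<in> {0..h}"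
        have u1: "(x+h, y+s) \<in> U" using inU[of h s] s h by auto
        have u2: "(x+0, y+s) \<in> U" using inU[of 0 s] s h by auto
        show "((\<lambda>s. f (x+h,y+s) - f (x,y+s)) has_vector_derivative
                pd_v f (x+h,y+s) - pd_v f (x,y+s)) (at s)"
          using u2 by (intro has_vector_derivative_diff line_v_shift fd u1) auto
        have lin: "D2 (h,s) - D2 (0,s) - h *\<^sub>R D2 (1,0) = 0"
        proof -
          have "D2 (h,s) - D2 (0,s) = D2 ((h,s) - (0,s))" using linear_diff[OF lin2, of "(h,s)" "(0,s)"] by simp
          also have "(h,s) - (0,s) = h *\<^sub>R ((1::real),(0::real))" by simp
          also have "D2 (h *\<^sub>R (1,0)) = h *\<^sub>R D2 (1,0)" using linear_scale[OF lin2, of h "(1,0)"] by simp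
          finally show ?thesis by simp
        qed
        have "pd_v f (x+h,y+s) - pd_v f (x,y+s) - h *\<^sub>R D2 (1,0) =
              (pd_v f (x+h,y+s) - pd_v f (x,y) - D2 (h,s))
            - (pd_v f (x+0,y+s) - pd_v f (x,y) - D2 (0,s))
            + (D2 (h,s) - D2 (0,s) - h *\<^sub>R D2 (1,0))" by (simp add: algebra_simps)
        also have "norm \<dots> \<le> e*(2*h) + e*(2*h)"
          using norm_triangle_ineq4[of "pd_v f (x+h,y+s) - pd_v f (x,y) - D2 (h,s)"
              "pd_v f (x+0,y+s) - pd_v f (x,y) - D2 (0,s)"]
            est2[of h s] est2[of 0 s] s h lin by auto
        finally show "norm (pd_v f (x+h,y+s) - pd_v f (x,y+s) - h *\<^sub>R D2 (1,0)) \<le> 4*e*h"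
          by simp
      qed
      then show ?thesis by simp
    qed
    define G where "G = (f (x+h,y+h) - f (x+h,y)) - (f (x,y+h) - f (x,y))"
    have G2: "(f (x+h,y+h) - f (x,y+h)) - (f (x+h,y) - f (x,y)) = G"
      by (simp add: G_def algebra_simps)
    have "(h*h) *\<^sub>R (D1 (0,1) - D2 (1,0)) =
          (G - h *\<^sub>R (h *\<^sub>R D2 (1,0))) - (G - h *\<^sub>R (h *\<^sub>R D1 (0,1)))"
      by (simp add: algebra_simps)
    then have "norm ((h*h) *\<^sub>R (D1 (0,1) - D2 (1,0))) \<le> (4*e*h)*h + (4*e*h)*h"
      using norm_triangle_ineq4[of "G - h *\<^sub>R (h *\<^sub>R D2 (1,0))" "G - h *\<^sub>R (h *\<^sub>R D1 (0,1))"]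
        A B G2 unfolding G_def by auto
    moreover have "norm ((h*h) *\<^sub>R (D1 (0,1) - D2 (1,0))) = (h*h) * norm (D1 (0,1) - D2 (1,0))"
      using h by simp
    moreover have "(4*e*h)*h + (4*e*h)*h = (h*h) * (8*e)" by (simp add: algebra_simps)
    ultimately have "(h*h) * norm (D1 (0,1) - D2 (1,0)) \<le> (h*h) * (8*e)"
      by simp
    then show ?thesis using h mult_le_cancel_left_pos[of "h*h"] by simp
  qed
  show ?thesis
  proof (rule ccontr)
    assume "D1 (0,1) \<noteq> D2 (1,0)"
    then have pos: "norm (D1 (0,1) - D2 (1,0)) > 0" by simp
    have "norm (D1 (0,1) - D2 (1,0)) \<le> 8 * (norm (D1 (0,1) - D2 (1,0)) / 16)"
      using key[of "norm (D1 (0,1) - D2 (1,0)) / 16"] pos by simp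
    then show False using pos by simp
  qed
qed

lemma young_pd:
  fixes f :: "real \<times> real \<Rightarrow> 'a::real_normed_vector"
  assumes U: "open U" "p \<in> U" and fd: "\<And>q. q\<in>U \<Longrightarrow> f differentiable (at q)"
    and d1: "pd_rho f differentiable (at p)" and d2: "pd_v f differentiable (at p)"
  shows "pd_v (pd_rho f) p = pd_rho (pd_v f) p"
proof -
  obtain D1 where D1: "(pd_rho f has_derivative D1) (at p)" using d1 differentiable_def by blast
  obtain D2 where D2: "(pd_v f has_derivative D2) (at p)" using d2 differentiable_def by blast
  obtain x y where p: "p = (x,y)" by (cases p)
  have "D1 (0,1) = D2 (1,0)" using young[OF U(1) U(2)[unfolded p] fd] D1 D2 p by auto
  then show ?thesis using pd_v_hd[OF D1] pd_rho_hd[OF D2] by simp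
qed



lemma cmat_mult_left: "cmat c A ** B = cmat c (A ** B)"
  by (simp add: cmat_def matrix_matrix_mult_def vec_eq_iff sum_distrib_left mult_ac)
lemma cmat_mult_right: "A ** cmat c B = cmat c (A ** B)"
  by (simp add: cmat_def matrix_matrix_mult_def vec_eq_iff sum_distrib_left mult_ac)
lemma cmat_add: "cmat c (A + B) = cmat c A + cmat c B"
  by (simp add: cmat_def vec_eq_iff algebra_simps)
lemma cmat_diff: "cmat c (A - B) = cmat c A - cmat c B"
  by (simp add: cmat_def vec_eq_iff algebra_simps)
lemma cmat_minus: "cmat c (- A) = - cmat c A"
  by (simp add: cmat_def vec_eq_iff algebra_simps)
lemma cmat_cmat: "cmat c (cmat d A) = cmat (c*d) A"
  by (simp add: cmat_def vec_eq_iff algebra_simps)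
lemma cmat_addl: "cmat (c + d) A = cmat c A + cmat d A"
  by (simp add: cmat_def vec_eq_iff algebra_simps)
lemma cmat_1[simp]: "cmat 1 A = A"
  by (simp add: cmat_def vec_eq_iff)
lemma cmat_0[simp]: "cmat 0 A = 0"
  by (simp add: cmat_def vec_eq_iff)
lemma cmat_zero[simp]: "cmat c 0 = 0"
  by (simp add: cmat_def vec_eq_iff)
lemma scaleR_cmat: "r *\<^sub>R A = cmat (of_real r) A"
  unfolding cmat_def by (simp add: vec_eq_iff) (simp add: scaleR_conv_of_real)
lemma cmat_nth[simp]: "cmat c A $ i $ j = c * A $ i $ j"
  by (simp add: cmat_def)

lemma matrix_add_rdistrib': "(A + B) ** C = A ** C + B ** (C::complex^'n::finite^'n)"
  by (simp add: matrix_matrix_mult_def vec_eq_iff sum.distrib algebra_simps)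
lemma matrix_diff_rdistrib': "(A - B) ** C = A ** C - B ** (C::complex^'n::finite^'n)"
  by (simp add: matrix_matrix_mult_def vec_eq_iff sum_subtractf algebra_simps)
lemma matrix_diff_ldistrib': "C ** (A - B) = C ** A - C ** (B::complex^'n::finite^'n)"
  by (simp add: matrix_matrix_mult_def vec_eq_iff sum_subtractf algebra_simps)
lemma matrix_minus_l: "(- A) ** C = - (A ** (C::complex^'n::finite^'n))"
  by (simp add: matrix_matrix_mult_def vec_eq_iff sum_negf)
lemma matrix_minus_r: "C ** (- A) = - (C ** (A::complex^'n::finite^'n))"
  by (simp add: matrix_matrix_mult_def vec_eq_iff sum_negf)

lemma bb_mm: "bounded_bilinear ((**) :: complex^'n::finite^'n \<Rightarrow> complex^'n^'n \<Rightarrow> complex^'n^'n)"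
proof -
  have "bilinear ((**) :: complex^'n::finite^'n \<Rightarrow> complex^'n^'n \<Rightarrow> complex^'n^'n)"
    unfolding bilinear_def
    by (auto intro!: linearI simp: matrix_add_ldistrib matrix_add_rdistrib'
        matrix_scalar_ac scalar_matrix_assoc)
  then show ?thesis by (simp add: bilinear_conv_bounded_bilinear)
qed

lemma bb_cmat: "bounded_bilinear (cmat :: complex \<Rightarrow> complex^'n::finite^'n \<Rightarrow> complex^'n^'n)"
proof -
  have "bilinear (cmat :: complex \<Rightarrow> complex^'n::finite^'n \<Rightarrow> complex^'n^'n)"
    unfolding bilinear_def
    by (auto intro!: linearI simp: cmat_def vec_eq_iff algebra_simps)
  then show ?thesis by (simp add: bilinear_conv_bounded_bilinear)
qed

lemma hvd_mm:
  fixes f g :: "real \<Rightarrow> complex^'n::finite^'n"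
  shows "(f has_vector_derivative f') (at t) \<Longrightarrow> (g has_vector_derivative g') (at t) \<Longrightarrow>
    ((\<lambda>x. f x ** g x) has_vector_derivative (f t ** g' + f' ** g t)) (at t)"
  by (rule bounded_bilinear.has_vector_derivative[OF bb_mm])

lemma hvd_cmat:
  fixes f :: "real \<Rightarrow> complex" and g :: "real \<Rightarrow> complex^'n::finite^'n"
  shows "(f has_vector_derivative f') (at t) \<Longrightarrow> (g has_vector_derivative g') (at t) \<Longrightarrow>
    ((\<lambda>x. cmat (f x) (g x)) has_vector_derivative (cmat (f t) g' + cmat f' (g t))) (at t)"
  by (rule bounded_bilinear.has_vector_derivative[OF bb_cmat])

lemma hvd_inverse:
  fixes f :: "real \<Rightarrow> complex"
  assumes "(f has_vector_derivative f') (at t)" "f t \<noteq> 0"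
  shows "((\<lambda>x. inverse (f x)) has_vector_derivative (- f' / (f t)^2)) (at t)"
proof -
  have "((\<lambda>x. inverse (f x)) has_derivative (\<lambda>h. - (inverse (f t) * (h *\<^sub>R f') * inverse (f t)))) (at t)"
    using Deriv.has_derivative_inverse[OF assms(2) assms(1)[unfolded has_vector_derivative_def]] .
  moreover have "(\<lambda>h. - (inverse (f t) * (h *\<^sub>R f') * inverse (f t))) = (\<lambda>h. h *\<^sub>R (- f' / (f t)^2))"
    by (rule ext) (simp add: scaleR_conv_of_real field_simps power2_eq_square)
  ultimately show ?thesis unfolding has_vector_derivative_def by simp
qed

lemma inv_left: "invertible (A::complex^'n::finite^'n) \<Longrightarrow> matrix_inv A ** A = mat 1"
  unfolding invertible_def matrix_inv_def by (rule someI2_ex) auto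
lemma inv_right: "invertible (A::complex^'n::finite^'n) \<Longrightarrow> A ** matrix_inv A = mat 1"
  unfolding invertible_def matrix_inv_def by (rule someI2_ex) auto



lemma scalar_alg:
  fixes w z wr wv zr zv c a ar av b br bv s xx :: complex
  assumes sig: "s = 1 \<or> s = -1" and a0: "a \<noteq> 0" and as: "a^2 + s \<noteq> 0" and x0: "xx \<noteq> 0"
    and arv: "ar = a*(s - a^2)/(xx*(a^2+s))"
    and avv: "av = 2* s*a^2/(xx*(a^2+s))"
    and bd: "b = inverse a" and brd: "br = - ar / a^2" and bvd: "bv = - av / a^2"
    and Cp: "zv - wr = c"
    and Fl: "(bv*w + b*wv - zv) - ((- s*br)*z + (- s*b)*zr - wr) = -(1 + s*b^2)*c"
  shows "xx*((-s)*(br*w + b*wr - zr)) + (-s)*(b*w - z) - xx*((-s*bv)*z + (-s*b)*zv - wv) = 0"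
proof -
  have xar: "xx*ar*(a^2+s) = a*(s - a^2)"
    using x0 as unfolding arv by simp
  have xav: "xx*av*(a^2+s) = 2* s*a^2"
    using x0 as unfolding avv by simp
  have cw: "-xx* s*b*br - s*b^2 - xx*bv = 0"
  proof -
    have e1: "-xx* s*b*br - s*b^2 - xx*bv = (s*(xx*ar) - s*a + (xx*av)*a)/a^3"
      using a0 unfolding bd brd bvd by (simp add: field_simps power2_eq_square power3_eq_cube)
    have "(s*(xx*ar) - s*a + (xx*av)*a) * (a^2+s) = s*(xx*ar*(a^2+s)) - s*a*(a^2+s) + (xx*av*(a^2+s))*a"
      by (simp add: algebra_simps)
    also have "\<dots> = s*(a*(s - a^2)) - s*a*(a^2+s) + (2* s*a^2)*a"
      by (simp only: xar xav)
    also have "\<dots> = 0"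
      by (simp add: algebra_simps power2_eq_square)
    finally have "s*(xx*ar) - s*a + (xx*av)*a = 0" using as by simp
    then show ?thesis using e1 by simp
  qed
  have cz: "s*b + xx* s*b*bv - xx* s*br = 0"
  proof -
    have e1: "s*b + xx* s*b*bv - xx* s*br = s*(a^2 - (xx*av) + (xx*ar)*a)/a^3"
      using a0 unfolding bd brd bvd by (simp add: field_simps power2_eq_square power3_eq_cube)
    have "(a^2 - (xx*av) + (xx*ar)*a) * (a^2+s) = a^2*(a^2+s) - xx*av*(a^2+s) + (xx*ar*(a^2+s))*a"
      by (simp add: algebra_simps)
    also have "\<dots> = a^2*(a^2+s) - 2* s*a^2 + (a*(s - a^2))*a"
      by (simp only: xar xav)
    also have "\<dots> = 0"
      by (simp add: algebra_simps power2_eq_square)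
    finally have "a^2 - (xx*av) + (xx*ar)*a = 0" using as by simp
    then show ?thesis using e1 by simp
  qed
  have s2: "s* s = 1" using sig by auto
  define G where "G = xx*((-s)*(br*w + b*wr - zr)) + (-s)*(b*w - z) - xx*((-s*bv)*z + (-s*b)*zv - wv)"
  have "b*G = xx*((bv*w + b*wv - zv) - ((- s*br)*z + (- s*b)*zr - wr) + (1 + s*b^2)*c)
        + xx*(1+s*b^2)*(zv - wr - c) + (-xx* s*b*br - s*b^2 - xx*bv)*w + (s*b + xx* s*b*bv - xx* s*br)*z"
    unfolding G_def using s2 by (simp add: algebra_simps power2_eq_square)
  also have "\<dots> = 0" using Fl Cp cw cz by (simp add: algebra_simps)
  finally have "b*G = 0" .
  moreover have "b \<noteq> 0" using a0 bd by simp
  ultimately show ?thesis unfolding G_def by simp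
qed

lemma F_zero:
  fixes phi om v r e s sc :: complex
  assumes r: "r \<noteq> 0" and e: "e*e = 1" and sc: "sc* sc = 1"
    and s2: "s^2 = (om - v)^2 + sc*r^2" and ph: "phi = (-sc*(om-v) + e* s)/r"
  shows "r*(phi*phi - sc) + (2* sc*(om - v))*phi = 0"
proof -
  have rp: "r*phi = -sc*(om-v) + e* s" using r ph by simp
  have "r*(r*(phi*phi - sc) + (2* sc*(om - v))*phi) = (r*phi)*(r*phi) + 2* sc*(om-v)*(r*phi) - sc*r^2"
    by (simp add: algebra_simps power2_eq_square)
  also have "\<dots> = (-sc*(om-v) + e* s)*(-sc*(om-v) + e* s) + 2* sc*(om-v)*(-sc*(om-v) + e* s) - sc*r^2"
    by (simp only: rp)
  also have "\<dots> = (e*e)* s^2 - (sc* sc)*(om-v)^2 - sc*r^2"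
    by (simp add: algebra_simps power2_eq_square)
  also have "\<dots> = 0" using e sc s2 by simp
  finally show ?thesis using r by simp
qed

lemma phi_derivs:
  fixes a ar av om yy xx sc :: complex
  assumes a0: "a \<noteq> 0" and as: "a^2 + sc \<noteq> 0" and x0: "xx \<noteq> 0"
    and F0: "xx*(a*a - sc) + (2* sc*(om - yy))*a = 0"
    and D1: "2*xx*a*ar + (a*a - sc) + 2* sc*(om-yy)*ar = 0"
    and D2: "2*xx*a*av + 2* sc*(om-yy)*av - 2* sc*a = 0"
  shows "ar = a*(sc - a^2)/(xx*(a^2+sc))" "av = 2* sc*a^2/(xx*(a^2+sc))"
proof -
  have nz: "xx*(a^2+sc) \<noteq> 0" using x0 as by simp
  have "ar*(xx*(a^2+sc)) - a*(sc - a^2) = a*(2*xx*a*ar + (a*a - sc) + 2* sc*(om-yy)*ar)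
        - ar*(xx*(a*a - sc) + (2* sc*(om - yy))*a)"
    by (simp add: algebra_simps power2_eq_square)
  also have "\<dots> = 0" using D1 F0 by simp
  finally have "ar*(xx*(a^2+sc)) = a*(sc - a^2)" by simp
  then show "ar = a*(sc - a^2)/(xx*(a^2+sc))" using nz by (simp add: eq_divide_eq)
  have "av*(xx*(a^2+sc)) - 2* sc*a^2 = a*(2*xx*a*av + 2* sc*(om-yy)*av - 2* sc*a)
        - av*(xx*(a*a - sc) + (2* sc*(om - yy))*a)"
    by (simp add: algebra_simps power2_eq_square)
  also have "\<dots> = 0" using D2 F0 by simp
  finally have "av*(xx*(a^2+sc)) = 2* sc*a^2" by simp
  then show "av = 2* sc*a^2/(xx*(a^2+sc))" using nz by (simp add: eq_divide_eq)
qed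

lemma matrix_alg:
  fixes Z W Zr Zv Wr Wv :: "complex^'n::finite^'n" and a ar av b br bv s xx :: complex
  assumes sig: "s = 1 \<or> s = -1" and a0: "a \<noteq> 0" and as: "a^2 + s \<noteq> 0" and x0: "xx \<noteq> 0"
    and arv: "ar = a*(s - a^2)/(xx*(a^2+s))"
    and avv: "av = 2* s*a^2/(xx*(a^2+s))"
    and bd: "b = inverse a" and brd: "br = - ar / a^2" and bvd: "bv = - av / a^2"
    and Cp: "Zv - Wr = W ** Z - Z ** W"
    and Fl: "(cmat bv W + cmat b Wv - Zv) - (cmat (- s*br) Z + cmat (- s*b) Zr - Wr) =
       (cmat b W - Z) ** (cmat (- s*b) Z - W) - (cmat (- s*b) Z - W) ** (cmat b W - Z)"
  shows "cmat xx (cmat (-s) (cmat br W + cmat b Wr - Zr)) + cmat (-s) (cmat b W - Z)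
        - cmat xx (cmat (- s*bv) Z + cmat (- s*b) Zv - Wv) = 0"
proof -
  have ex: "(cmat b W - Z) ** (cmat (- s*b) Z - W) - (cmat (- s*b) Z - W) ** (cmat b W - Z)
      = cmat (-(1 + s*b^2)) (W ** Z - Z ** W)"
    by (simp add: matrix_diff_rdistrib' matrix_diff_ldistrib' cmat_mult_left cmat_mult_right
        cmat_cmat vec_eq_iff algebra_simps power2_eq_square)
  show ?thesis
  proof (simp only: vec_eq_iff, intro allI)
    fix i j
    have c: "Zv$i$j - Wr$i$j = (W ** Z - Z ** W)$i$j" using Cp by (simp add: vec_eq_iff)
    have f: "(bv*W$i$j + b*Wv$i$j - Zv$i$j) - ((- s*br)*Z$i$j + (- s*b)*Zr$i$j - Wr$i$j)
        = -(1 + s*b^2) * (W ** Z - Z ** W)$i$j"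
      using arg_cong[OF Fl[unfolded ex], of "\<lambda>M. M$i$j"] by simp
    have "xx*((-s)*(br*W$i$j + b*Wr$i$j - Zr$i$j)) + (-s)*(b*W$i$j - Z$i$j)
          - xx*((-s*bv)*Z$i$j + (-s*b)*Zv$i$j - Wv$i$j) = 0"
      by (rule scalar_alg[OF sig a0 as x0 arv avv bd brd bvd c f])
    then show "(cmat xx (cmat (-s) (cmat br W + cmat b Wr - Zr)) + cmat (-s) (cmat b W - Z)
        - cmat xx (cmat (- s*bv) Z + cmat (- s*b) Zv - Wv)) $ i $ j = 0 $ i $ j"
      by simp
  qed
qed



lemma hvd_cmul:
  fixes f :: "real \<Rightarrow> complex"
  shows "(f has_vector_derivative f') (at t) \<Longrightarrow> ((\<lambda>x. c * f x) has_vector_derivative (c * f')) (at t)"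
  using bounded_linear.has_vector_derivative[OF bounded_linear_mult_right] by blast

lemma hvd_scaleRc:
  fixes f :: "real \<Rightarrow> complex^'n::finite^'n"
  shows "(f has_vector_derivative f') (at t) \<Longrightarrow> ((\<lambda>x. c *\<^sub>R f x) has_vector_derivative (c *\<^sub>R f')) (at t)"
  using bounded_linear.has_vector_derivative[OF bounded_linear_scaleR_right] by blast

lemma hvd_ofreal_id: "((\<lambda>t. complex_of_real t) has_vector_derivative 1) (at t)"
  using has_vector_derivative_of_real[OF DERIV_ident] by simp

theorem mainTheorem7:
  fixes \<sigma> :: real and U :: "(real \<times> real) set" and \<phi> :: "real \<times> real \<Rightarrow> complex"
    and M X :: "real \<times> real \<Rightarrow> complex^'n^'n"
  assumes sigma: "\<sigma> \<in> {1, -1}"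
    and U_open: "open U" and U_sub: "U \<subseteq> weyl_half_plane"
    and phi_smooth: "Cinf_on U \<phi>"
    and phi_form: "\<exists>\<omega>::complex. \<exists>s::real \<times> real \<Rightarrow> complex. \<exists>\<epsilon>::complex. \<epsilon> \<in> {1, -1}
        \<and> continuous_on U s
        \<and> (\<forall>p\<in>U. (s p)\<^sup>2 = (\<omega> - of_real (snd p))\<^sup>2 + of_real \<sigma> * (of_real (fst p))\<^sup>2)
        \<and> (\<forall>p\<in>U. \<phi> p = (- of_real \<sigma> * (\<omega> - of_real (snd p)) + \<epsilon> * s p) / of_real (fst p))"
    and phi_nz: "\<forall>p\<in>U. \<phi> p \<noteq> 0"
    and phi_sq: "\<forall>p\<in>U. (\<phi> p)\<^sup>2 + of_real \<sigma> \<noteq> 0"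
    and M_inv: "\<forall>p\<in>U. invertible (M p)" and M_C2: "Ck_on 2 U M"
    and X_inv: "\<forall>p\<in>U. invertible (X p)" and X_C2: "Ck_on 2 U X"
    and Xinv_C1: "Ck_on 1 U (\<lambda>p. matrix_inv (X p))"
    and BM: "form_eq_on U (form_scale \<phi> (form_add (d0 X) (form_rmult (maurer_cartan M) X)))
                          (hodge \<sigma> (d0 X))"
  shows "\<forall>p\<in>U. d1 (form_scale (\<lambda>q. of_real (fst q)) (hodge \<sigma> (maurer_cartan M))) p = 0"
proof (intro ballI)
  fix p assume pU: "p \<in> U"
  obtain x y where p: "p = (x,y)" by (cases p)
  have pxy: "(x,y) \<in> U" using pU p by simp
  have x0: "x > 0" using U_sub pxy by (auto simp: weyl_half_plane_def)
  define sc where "sc = complex_of_real \<sigma>"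
  have sig': "sc = 1 \<or> sc = -1" using sigma by (auto simp: sc_def)
  have sc2: "sc* sc = 1" using sig' by auto
  have Xd: "\<And>q. q\<in>U \<Longrightarrow> X differentiable (at q)"
    and Xrd: "\<And>q. q\<in>U \<Longrightarrow> pd_rho X differentiable (at q)"
    and Xvd: "\<And>q. q\<in>U \<Longrightarrow> pd_v X differentiable (at q)"
    using X_C2 by (simp_all add: numeral_2_eq_2)
  have Md: "\<And>q. q\<in>U \<Longrightarrow> M differentiable (at q)"
    and Mrd: "\<And>q. q\<in>U \<Longrightarrow> pd_rho M differentiable (at q)"
    and Mvd: "\<And>q. q\<in>U \<Longrightarrow> pd_v M differentiable (at q)"
    using M_C2 by (simp_all add: numeral_2_eq_2)
  have Yd: "\<And>q. q\<in>U \<Longrightarrow> (\<lambda>p. matrix_inv (X p)) differentiable (at q)"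
    using Xinv_C1 by simp
  have phid: "\<And>q. q\<in>U \<Longrightarrow> \<phi> differentiable (at q)"
    using phi_smooth unfolding Cinf_on_def by (metis Ck_on.simps(2) One_nat_def)
  define Y where "Y = (\<lambda>q. matrix_inv (X q))"
  define Xr where "Xr = pd_rho X"
  define Xv where "Xv = pd_v X"
  define Z where "Z = (\<lambda>q. Xr q ** Y q)"
  define W where "W = (\<lambda>q. Xv q ** Y q)"
  define Ar where "Ar = (\<lambda>q. matrix_inv (M q) ** pd_rho M q)"
  define Av where "Av = (\<lambda>q. matrix_inv (M q) ** pd_v M q)"
  have XY: "\<And>q. q\<in>U \<Longrightarrow> X q ** Y q = mat 1" using X_inv inv_right unfolding Y_def by blast
  have YX: "\<And>q. q\<in>U \<Longrightarrow> Y q ** X q = mat 1" using X_inv inv_left unfolding Y_def by blast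
  have E1: "\<And>q. q\<in>U \<Longrightarrow> cmat (\<phi> q) (Xr q + Ar q ** X q) = Xv q"
    using BM unfolding form_eq_on_def form_scale_def form_add_def d0_def form_rmult_def
      maurer_cartan_def hodge_def Xr_def Xv_def Ar_def by auto
  have E2: "\<And>q. q\<in>U \<Longrightarrow> cmat (\<phi> q) (Xv q + Av q ** X q) = (- \<sigma>) *\<^sub>R Xr q"
    using BM unfolding form_eq_on_def form_scale_def form_add_def d0_def form_rmult_def
      maurer_cartan_def hodge_def Xr_def Xv_def Av_def by auto
  have AZ: "Ar q = cmat (inverse (\<phi> q)) (W q) - Z q" if q: "q\<in>U" for q
  proof -
    have "cmat (\<phi> q) (Xr q + Ar q ** X q) ** Y q = Xv q ** Y q" using E1[OF q] by simp
    then have "cmat (\<phi> q) (Z q + Ar q) = W q"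
      by (simp add: cmat_mult_left matrix_add_rdistrib' Z_def W_def XY[OF q]
          flip: matrix_mul_assoc)
    then have "cmat (inverse (\<phi> q)) (cmat (\<phi> q) (Z q + Ar q)) = cmat (inverse (\<phi> q)) (W q)"
      by simp
    then have "Z q + Ar q = cmat (inverse (\<phi> q)) (W q)" using phi_nz q by (simp add: cmat_cmat)
    then show ?thesis by (simp add: algebra_simps)
  qed
  have AW: "Av q = cmat (- sc * inverse (\<phi> q)) (Z q) - W q" if q: "q\<in>U" for q
  proof -
    have "cmat (\<phi> q) (Xv q + Av q ** X q) ** Y q = ((- \<sigma>) *\<^sub>R Xr q) ** Y q" using E2[OF q] by simp
    then have "cmat (\<phi> q) (W q + Av q) = cmat (- sc) (Z q)"
      by (simp add: cmat_mult_left matrix_add_rdistrib' Z_def W_def XY[OF q] scaleR_cmat sc_def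
          flip: matrix_mul_assoc)
    then have "cmat (inverse (\<phi> q)) (cmat (\<phi> q) (W q + Av q)) = cmat (inverse (\<phi> q)) (cmat (- sc) (Z q))"
      by simp
    then have "W q + Av q = cmat (- sc * inverse (\<phi> q)) (Z q)" using phi_nz q
      by (simp add: cmat_cmat mult.commute)
    then show ?thesis by (simp add: algebra_simps)
  qed
  have Uy: "open {t. (t,y) \<in> U}" using open_line_rho[OF U_open] .
  have Ux: "open {t. (x,t) \<in> U}" using open_line_v[OF U_open] .
  have xin: "x \<in> {t. (t,y) \<in> U}" using pxy by simp
  have yin: "y \<in> {t. (x,t) \<in> U}" using pxy by simp
  have hXr: "((\<lambda>t. X (t,y)) has_vector_derivative Xr (x,y)) (at x)"
    using line_rho[OF Xd[OF pxy]] unfolding Xr_def .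
  have hXv: "((\<lambda>t. X (x,t)) has_vector_derivative Xv (x,y)) (at y)"
    using line_v[OF Xd[OF pxy]] unfolding Xv_def .
  define Yr where "Yr = pd_rho Y (x,y)"
  define Yv where "Yv = pd_v Y (x,y)"
  have hYr: "((\<lambda>t. Y (t,y)) has_vector_derivative Yr) (at x)"
    using line_rho[OF Yd[OF pxy]] unfolding Yr_def Y_def .
  have hYv: "((\<lambda>t. Y (x,t)) has_vector_derivative Yv) (at y)"
    using line_v[OF Yd[OF pxy]] unfolding Yv_def Y_def .
  have Yr_eq: "Yr = - (Y (x,y) ** Xr (x,y) ** Y (x,y))"
  proof -
    have "Y (x,y) ** Xr (x,y) + Yr ** X (x,y) = 0"
      by (rule hvd_unique_open[OF hvd_mm[OF hYr hXr] has_vector_derivative_const Uy xin])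
        (use YX in auto)
    then have "Yr ** X (x,y) = - (Y (x,y) ** Xr (x,y))" by (simp add: eq_neg_iff_add_eq_0 add.commute)
    then have "Yr ** X (x,y) ** Y (x,y) = - (Y (x,y) ** Xr (x,y)) ** Y (x,y)" by simp
    then show ?thesis by (simp add: matrix_minus_l XY[OF pxy] flip: matrix_mul_assoc)
  qed
  have Yv_eq: "Yv = - (Y (x,y) ** Xv (x,y) ** Y (x,y))"
  proof -
    have "Y (x,y) ** Xv (x,y) + Yv ** X (x,y) = 0"
      by (rule hvd_unique_open[OF hvd_mm[OF hYv hXv] has_vector_derivative_const Ux yin])
        (use YX in auto)
    then have "Yv ** X (x,y) = - (Y (x,y) ** Xv (x,y))" by (simp add: eq_neg_iff_add_eq_0 add.commute)
    then have "Yv ** X (x,y) ** Y (x,y) = - (Y (x,y) ** Xv (x,y)) ** Y (x,y)" by simp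
    then show ?thesis by (simp add: matrix_minus_l XY[OF pxy] flip: matrix_mul_assoc)
  qed
  have Xrd': "Xr differentiable (at (x,y))" using Xrd[OF pxy] unfolding Xr_def .
  have Xvd': "Xv differentiable (at (x,y))" using Xvd[OF pxy] unfolding Xv_def .
  define Zr where "Zr = Xr (x,y) ** Yr + pd_rho Xr (x,y) ** Y (x,y)"
  define Zv where "Zv = Xr (x,y) ** Yv + pd_v Xr (x,y) ** Y (x,y)"
  define Wr where "Wr = Xv (x,y) ** Yr + pd_rho Xv (x,y) ** Y (x,y)"
  define Wv where "Wv = Xv (x,y) ** Yv + pd_v Xv (x,y) ** Y (x,y)"
  have hZr: "((\<lambda>t. Z (t,y)) has_vector_derivative Zr) (at x)"
    unfolding Z_def Zr_def by (rule hvd_mm[OF line_rho[OF Xrd'] hYr])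
  have hZv: "((\<lambda>t. Z (x,t)) has_vector_derivative Zv) (at y)"
    unfolding Z_def Zv_def by (rule hvd_mm[OF line_v[OF Xrd'] hYv])
  have hWr: "((\<lambda>t. W (t,y)) has_vector_derivative Wr) (at x)"
    unfolding W_def Wr_def by (rule hvd_mm[OF line_rho[OF Xvd'] hYr])
  have hWv: "((\<lambda>t. W (x,t)) has_vector_derivative Wv) (at y)"
    unfolding W_def Wv_def by (rule hvd_mm[OF line_v[OF Xvd'] hYv])
  have symX: "pd_v Xr (x,y) = pd_rho Xv (x,y)"
    unfolding Xr_def Xv_def by (rule young_pd[OF U_open pxy Xd Xrd[OF pxy] Xvd[OF pxy]])
  have compat: "Zv - Wr = W (x,y) ** Z (x,y) - Z (x,y) ** W (x,y)"
    unfolding Zv_def Wr_def Yv_eq Yr_eq Z_def W_def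
    by (simp add: matrix_minus_r matrix_mul_assoc symX algebra_simps)
  define a where "a = \<phi> (x,y)"
  define ar where "ar = pd_rho \<phi> (x,y)"
  define av where "av = pd_v \<phi> (x,y)"
  have hphr: "((\<lambda>t. \<phi> (t,y)) has_vector_derivative ar) (at x)"
    using line_rho[OF phid[OF pxy]] unfolding ar_def .
  have hphv: "((\<lambda>t. \<phi> (x,t)) has_vector_derivative av) (at y)"
    using line_v[OF phid[OF pxy]] unfolding av_def .
  have a0: "a \<noteq> 0" using phi_nz pxy a_def by simp
  have as: "a^2 + sc \<noteq> 0" using phi_sq pxy a_def sc_def by simp
  define b where "b = inverse a"
  define br where "br = - ar / a^2"
  define bv where "bv = - av / a^2"
  have hbr: "((\<lambda>t. inverse (\<phi> (t,y))) has_vector_derivative br) (at x)"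
    using hvd_inverse[OF hphr] a0 unfolding br_def a_def by simp
  have hbv: "((\<lambda>t. inverse (\<phi> (x,t))) has_vector_derivative bv) (at y)"
    using hvd_inverse[OF hphv] a0 unfolding bv_def a_def by simp
  define ArR where "ArR = cmat br (W (x,y)) + cmat b Wr - Zr"
  define ArV where "ArV = cmat bv (W (x,y)) + cmat b Wv - Zv"
  define AvR where "AvR = cmat (- sc*br) (Z (x,y)) + cmat (- sc*b) Zr - Wr"
  define AvV where "AvV = cmat (- sc*bv) (Z (x,y)) + cmat (- sc*b) Zv - Wv"
  have hArR: "((\<lambda>t. Ar (t,y)) has_vector_derivative ArR) (at x)"
  proof -
    have "((\<lambda>t. cmat (inverse (\<phi> (t,y))) (W (t,y)) - Z (t,y)) has_vector_derivative ArR) (at x)"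
      by (rule has_vector_derivative_eq_rhs[OF has_vector_derivative_diff[OF hvd_cmat[OF hbr hWr] hZr]])
        (simp add: ArR_def b_def a_def algebra_simps)
    then show ?thesis
      by (rule has_vector_derivative_transform_within_open[OF _ Uy xin]) (simp add: AZ)
  qed
  have hArV: "((\<lambda>t. Ar (x,t)) has_vector_derivative ArV) (at y)"
  proof -
    have "((\<lambda>t. cmat (inverse (\<phi> (x,t))) (W (x,t)) - Z (x,t)) has_vector_derivative ArV) (at y)"
      by (rule has_vector_derivative_eq_rhs[OF has_vector_derivative_diff[OF hvd_cmat[OF hbv hWv] hZv]])
        (simp add: ArV_def b_def a_def algebra_simps)
    then show ?thesis
      by (rule has_vector_derivative_transform_within_open[OF _ Ux yin]) (simp add: AZ)
  qed
  have hAvR: "((\<lambda>t. Av (t,y)) has_vector_derivative AvR) (at x)"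
  proof -
    have "((\<lambda>t. cmat (- sc * inverse (\<phi> (t,y))) (Z (t,y)) - W (t,y)) has_vector_derivative AvR) (at x)"
      by (rule has_vector_derivative_eq_rhs[OF has_vector_derivative_diff[OF
            hvd_cmat[OF hvd_cmul[OF hbr] hZr] hWr]])
        (simp add: AvR_def b_def a_def algebra_simps)
    then show ?thesis
      by (rule has_vector_derivative_transform_within_open[OF _ Uy xin]) (simp add: AW)
  qed
  have hAvV: "((\<lambda>t. Av (x,t)) has_vector_derivative AvV) (at y)"
  proof -
    have "((\<lambda>t. cmat (- sc * inverse (\<phi> (x,t))) (Z (x,t)) - W (x,t)) has_vector_derivative AvV) (at y)"
      by (rule has_vector_derivative_eq_rhs[OF has_vector_derivative_diff[OF
            hvd_cmat[OF hvd_cmul[OF hbv] hZv] hWv]])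
        (simp add: AvV_def b_def a_def algebra_simps)
    then show ?thesis
      by (rule has_vector_derivative_transform_within_open[OF _ Ux yin]) (simp add: AW)
  qed
  have MA: "M q ** Ar q = pd_rho M q" if "q \<in> U" for q
    using inv_right[OF M_inv[rule_format, OF that]] unfolding Ar_def
    by (simp add: matrix_mul_assoc)
  have MAv: "M q ** Av q = pd_v M q" if "q \<in> U" for q
    using inv_right[OF M_inv[rule_format, OF that]] unfolding Av_def
    by (simp add: matrix_mul_assoc)
  have hMr: "((\<lambda>t. M (t,y)) has_vector_derivative pd_rho M (x,y)) (at x)"
    using line_rho[OF Md[OF pxy]] .
  have hMv: "((\<lambda>t. M (x,t)) has_vector_derivative pd_v M (x,y)) (at y)"
    using line_v[OF Md[OF pxy]] .
  have f1: "M (x,y) ** ArV + pd_v M (x,y) ** Ar (x,y) = pd_v (pd_rho M) (x,y)"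
    by (rule hvd_unique_open[OF hvd_mm[OF hMv hArV] line_v[OF Mrd[OF pxy]] Ux yin])
      (use MA in auto)
  have f2: "M (x,y) ** AvR + pd_rho M (x,y) ** Av (x,y) = pd_rho (pd_v M) (x,y)"
    by (rule hvd_unique_open[OF hvd_mm[OF hMr hAvR] line_rho[OF Mvd[OF pxy]] Uy xin])
      (use MAv in auto)
  have symM: "pd_v (pd_rho M) (x,y) = pd_rho (pd_v M) (x,y)"
    by (rule young_pd[OF U_open pxy Md Mrd[OF pxy] Mvd[OF pxy]])
  have "M (x,y) ** ArV + (M (x,y) ** Av (x,y)) ** Ar (x,y) = M (x,y) ** AvR + (M (x,y) ** Ar (x,y)) ** Av (x,y)"
    using f1 f2 symM MA[OF pxy] MAv[OF pxy] by simp
  then have "M (x,y) ** (ArV - AvR - (Ar (x,y) ** Av (x,y) - Av (x,y) ** Ar (x,y))) = 0"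
    by (simp add: matrix_diff_ldistrib' matrix_add_ldistrib matrix_mul_assoc algebra_simps)
  then have "matrix_inv (M (x,y)) ** (M (x,y) ** (ArV - AvR - (Ar (x,y) ** Av (x,y) - Av (x,y) ** Ar (x,y)))) = 0"
    by simp
  then have flat: "ArV - AvR = Ar (x,y) ** Av (x,y) - Av (x,y) ** Ar (x,y)"
    using inv_left[OF M_inv[rule_format, OF pxy]] by (simp add: matrix_mul_assoc)
  have Arp: "Ar (x,y) = cmat b (W (x,y)) - Z (x,y)" using AZ[OF pxy] b_def a_def by simp
  have Avp: "Av (x,y) = cmat (- sc*b) (Z (x,y)) - W (x,y)" using AW[OF pxy] b_def a_def by simp
  obtain \<omega> s \<epsilon> where e: "\<epsilon> \<in> {1, -1}"
    and s2: "\<forall>p\<in>U. (s p)\<^sup>2 = (\<omega> - of_real (snd p))\<^sup>2 + of_real \<sigma> * (of_real (fst p))\<^sup>2"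
    and ph: "\<forall>p\<in>U. \<phi> p = (- of_real \<sigma> * (\<omega> - of_real (snd p)) + \<epsilon> * s p) / of_real (fst p)"
    using phi_form by blast
  have Fz: "complex_of_real (fst q) * (\<phi> q * \<phi> q - sc) + (2* sc*(\<omega> - of_real (snd q))) * \<phi> q = 0"
    if q: "q \<in> U" for q
  proof (rule F_zero)
    show "complex_of_real (fst q) \<noteq> 0" using U_sub q by (auto simp: weyl_half_plane_def)
    show "\<epsilon> * \<epsilon> = 1" using e by auto
    show "sc * sc = 1" by (rule sc2)
    show "(s q)^2 = (\<omega> - of_real (snd q))^2 + sc * (of_real (fst q))^2" using s2 q sc_def by simp
    show "\<phi> q = (- sc * (\<omega> - of_real (snd q)) + \<epsilon> * s q) / of_real (fst q)" using ph q sc_def by simp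
  qed
  have D1raw: "complex_of_real x * (a*ar + ar*a - 0) + 1 * (a*a - sc) + (2* sc*(\<omega> - of_real y)) * ar = 0"
    by (rule hvd_unique_open[OF has_vector_derivative_add[OF has_vector_derivative_mult[OF hvd_ofreal_id
          has_vector_derivative_diff[OF has_vector_derivative_mult[OF hphr hphr] has_vector_derivative_const]]
          hvd_cmul[OF hphr]] has_vector_derivative_const Uy xin, unfolded a_def[symmetric]])
      (use Fz in auto)
  have D2raw: "complex_of_real x * (a*av + av*a - 0) + ((2* sc*(\<omega> - of_real y)) * av + (2* sc*(0 - 1)) * a) = 0"
    by (rule hvd_unique_open[OF has_vector_derivative_add[OF
          hvd_cmul[OF has_vector_derivative_diff[OF has_vector_derivative_mult[OF hphv hphv] has_vector_derivative_const]]
          has_vector_derivative_mult[OF hvd_cmul[OF has_vector_derivative_diff[OF has_vector_derivative_const hvd_ofreal_id]] hphv]]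
          has_vector_derivative_const Ux yin, unfolded a_def[symmetric]])
      (use Fz in auto)
  have F0: "complex_of_real x * (a*a - sc) + (2* sc*(\<omega> - of_real y))*a = 0"
    using Fz[OF pxy] a_def by simp
  have D1: "2*complex_of_real x*a*ar + (a*a - sc) + 2* sc*(\<omega> - of_real y)*ar = 0"
  proof -
    have "2*complex_of_real x*a*ar + (a*a - sc) + 2* sc*(\<omega> - of_real y)*ar =
      complex_of_real x * (a*ar + ar*a - 0) + 1 * (a*a - sc) + (2* sc*(\<omega> - of_real y)) * ar"
      by (simp add: algebra_simps)
    then show ?thesis using D1raw by (simp only:)
  qed
  have D2: "2*complex_of_real x*a*av + 2* sc*(\<omega> - of_real y)*av - 2* sc*a = 0"
  proof -
    have "2*complex_of_real x*a*av + 2* sc*(\<omega> - of_real y)*av - 2* sc*a =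
      complex_of_real x * (a*av + av*a - 0) + ((2* sc*(\<omega> - of_real y)) * av + (2* sc*(0 - 1)) * a)"
      by (simp add: algebra_simps)
    then show ?thesis using D2raw by (simp only:)
  qed
  have xx0: "complex_of_real x \<noteq> 0" using x0 by simp
  note pd = phi_derivs[OF a0 as xx0 F0 D1 D2]
  have gl: "d1 (form_scale (\<lambda>q. of_real (fst q)) (hodge \<sigma> (maurer_cartan M))) p =
      pd_rho (\<lambda>q. cmat (of_real (fst q)) ((- \<sigma>) *\<^sub>R Ar q)) (x,y) - pd_v (\<lambda>q. cmat (of_real (fst q)) (Av q)) (x,y)"
    unfolding p d1_def form_scale_def hodge_def maurer_cartan_def Ar_def Av_def by simp
  have h1: "((\<lambda>t. cmat (of_real t) ((- \<sigma>) *\<^sub>R Ar (t,y))) has_vector_derivative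
      (cmat (of_real x) ((- \<sigma>) *\<^sub>R ArR) + cmat 1 ((- \<sigma>) *\<^sub>R Ar (x,y)))) (at x)"
    by (rule hvd_cmat[OF hvd_ofreal_id hvd_scaleRc[OF hArR]])
  have h2: "((\<lambda>t. cmat (of_real x) (Av (x,t))) has_vector_derivative
      (cmat (of_real x) AvV + cmat 0 (Av (x,y)))) (at y)"
    by (rule hvd_cmat[OF has_vector_derivative_const hAvV])
  have g1: "pd_rho (\<lambda>q. cmat (of_real (fst q)) ((- \<sigma>) *\<^sub>R Ar q)) (x,y)
      = cmat (of_real x) ((- \<sigma>) *\<^sub>R ArR) + cmat 1 ((- \<sigma>) *\<^sub>R Ar (x,y))"
  proof -
    have "pd_rho (\<lambda>q. cmat (of_real (fst q)) ((- \<sigma>) *\<^sub>R Ar q)) (x,y) =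
        vector_derivative (\<lambda>t. cmat (of_real t) ((- \<sigma>) *\<^sub>R Ar (t,y))) (at x)"
      unfolding pd_rho_def by simp
    also have "\<dots> = cmat (of_real x) ((- \<sigma>) *\<^sub>R ArR) + cmat 1 ((- \<sigma>) *\<^sub>R Ar (x,y))"
      by (rule vector_derivative_at[OF h1])
    finally show ?thesis .
  qed
  have g2: "pd_v (\<lambda>q. cmat (of_real (fst q)) (Av q)) (x,y)
      = cmat (of_real x) AvV + cmat 0 (Av (x,y))"
  proof -
    have "pd_v (\<lambda>q. cmat (of_real (fst q)) (Av q)) (x,y) =
        vector_derivative (\<lambda>t. cmat (of_real x) (Av (x,t))) (at y)"
      unfolding pd_v_def by simp
    also have "\<dots> = cmat (of_real x) AvV + cmat 0 (Av (x,y))"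
      by (rule vector_derivative_at[OF h2])
    finally show ?thesis .
  qed
  have fin: "cmat (of_real x) (cmat (-sc) (cmat br (W (x,y)) + cmat b Wr - Zr)) + cmat (-sc) (cmat b (W (x,y)) - Z (x,y))
        - cmat (of_real x) (cmat (- sc*bv) (Z (x,y)) + cmat (- sc*b) Zv - Wv) = 0"
    by (rule matrix_alg[OF sig' a0 as xx0 pd b_def br_def bv_def compat flat[unfolded Arp Avp ArV_def AvR_def]])
  show "d1 (form_scale (\<lambda>q. of_real (fst q)) (hodge \<sigma> (maurer_cartan M))) p = 0"
    unfolding gl g1 g2 using fin unfolding ArR_def AvV_def Arp
    by (simp add: scaleR_cmat sc_def)
qed


end
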